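(* Let $S$ be a nonempty set, and in the category $\mathbf{Sets}$ let $U:\mathbf{Sets}\to\mathbf{Sets}$ be the functor $X\mapsto X^S$, right adjoint to $F: X\mapsto S\times X$, with $T=UF$ the associated state monad. Then $U$ is monadic, i.e. the comparison functor $K:\mathbf{Sets}\to\mathbf{Alg}^T$, $K(Y)=(Y^S,\epsilon_Y^S)$, $K(g)=g^S$, is an equivalence of categories.
   Context: For a set $X$, $TX=(S\times X)^S$; the unit $\eta_X:X\to TX$ sends $x$ to $s\mapsto (s,x)$; the multiplication $\mu_X:TTX\to TX$ is $(\epsilon_{S\times X})^S$, i.e. it sends $s\mapsto (c[s], s'\mapsto (c'[s,s'],x[s,s']))$ to $s\mapsto (c'[s,c[s]],x[s,c[s]])$. Here $\epsilon_Z:S\times Z^S\to Z$, $(s,f)\mapsto f(s)$, is evaluation (the counit of the adjunction $F\dashv U$). A $T$-algebra is a pair $(X,h)$ with $h:TX\to X$ satisfying $h\circ Th=h\circ\mu_X$ and $h\circ\eta_X=\mathrm{id}_X$; a morphism $(X,h)\to(X',h')$ is a map $u:X\to X'$ with $h'\circ Tu=u\circ h$; these form the category $\mathbf{Alg}^T$. "Monadic" here means that $K$ is an equivalence of categories (not necessarily an isomorphism). *)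

theory Defs
  imports "HOL-Library.FuncSet"
begin

(* The category Sets is modelled by carrier sets (of arbitrary HOL types) with
  morphisms the extensional functions  Y ->E Y'. *)

definition TX :: "'s set \<Rightarrow> 'x set \<Rightarrow> ('s \<Rightarrow> 's \<times> 'x) set" where
  "TX S X = (S \<rightarrow>\<^sub>E S \<times> X)"

definition st_eta :: "'s set \<Rightarrow> 'x \<Rightarrow> ('s \<Rightarrow> 's \<times> 'x)" where
  "st_eta S x = (\<lambda>s\<in>S. (s, x))"

definition st_map :: "'s set \<Rightarrow> ('x \<Rightarrow> 'y) \<Rightarrow> ('s \<Rightarrow> 's \<times> 'x) \<Rightarrow> ('s \<Rightarrow> 's \<times> 'y)" where
  "st_map S u c = (\<lambda>s\<in>S. (fst (c s), u (snd (c s))))"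

(* Multiplication mu_X = (epsilon_{S \<times> X})^S. *)
definition st_mu :: "'s set \<Rightarrow> ('s \<Rightarrow> 's \<times> ('s \<Rightarrow> 's \<times> 'x)) \<Rightarrow> ('s \<Rightarrow> 's \<times> 'x)" where
  "st_mu S cc = (\<lambda>s\<in>S. (snd (cc s)) (fst (cc s)))"

definition is_alg :: "'s set \<Rightarrow> 'x set \<Rightarrow> (('s \<Rightarrow> 's \<times> 'x) \<Rightarrow> 'x) \<Rightarrow> bool" where
  "is_alg S X h \<longleftrightarrow>
     (\<forall>c\<in>TX S X. h c \<in> X) \<and>
     (\<forall>cc\<in>TX S (TX S X). h (st_map S h cc) = h (st_mu S cc)) \<and>
     (\<forall>x\<in>X. h (st_eta S x) = x)"

definition alg_hom :: "'s set \<Rightarrow> 'x set \<times> (('s \<Rightarrow> 's \<times> 'x) \<Rightarrow> 'x)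
                        \<Rightarrow> 'y set \<times> (('s \<Rightarrow> 's \<times> 'y) \<Rightarrow> 'y) \<Rightarrow> ('x \<Rightarrow> 'y) set" where
  "alg_hom S A B = {u. u \<in> fst A \<rightarrow>\<^sub>E fst B \<and>
       (\<forall>c\<in>TX S (fst A). snd B (st_map S u c) = u (snd A c))}"

definition alg_iso :: "'s set \<Rightarrow> 'x set \<times> (('s \<Rightarrow> 's \<times> 'x) \<Rightarrow> 'x)
                        \<Rightarrow> 'y set \<times> (('s \<Rightarrow> 's \<times> 'y) \<Rightarrow> 'y) \<Rightarrow> bool" where
  "alg_iso S A B \<longleftrightarrow> (\<exists>u v. u \<in> alg_hom S A B \<and> v \<in> alg_hom S B A \<and>
       (\<forall>x\<in>fst A. v (u x) = x) \<and> (\<forall>y\<in>fst B. u (v y) = y))"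

definition st_eps :: "'s \<times> ('s \<Rightarrow> 'y) \<Rightarrow> 'y" where
  "st_eps p = (snd p) (fst p)"

definition st_eps_pow :: "'s set \<Rightarrow> ('s \<Rightarrow> 's \<times> ('s \<Rightarrow> 'y)) \<Rightarrow> ('s \<Rightarrow> 'y)" where
  "st_eps_pow S c = (\<lambda>s\<in>S. st_eps (c s))"

definition K_obj :: "'s set \<Rightarrow> 'y set \<Rightarrow> ('s \<Rightarrow> 'y) set \<times> (('s \<Rightarrow> 's \<times> ('s \<Rightarrow> 'y)) \<Rightarrow> ('s \<Rightarrow> 'y))" where
  "K_obj S Y = (S \<rightarrow>\<^sub>E Y, st_eps_pow S)"

definition K_mor :: "'s set \<Rightarrow> 'y set \<Rightarrow> ('y \<Rightarrow> 'z) \<Rightarrow> ('s \<Rightarrow> 'y) \<Rightarrow> ('s \<Rightarrow> 'z)" where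
  "K_mor S Y g = (\<lambda>f\<in>S \<rightarrow>\<^sub>E Y. \<lambda>s\<in>S. g (f s))"

end

theory Submission
  imports Defs
begin

lemma alg_closed: "is_alg S X h \<Longrightarrow> c \<in> TX S X \<Longrightarrow> h c \<in> X"
  unfolding is_alg_def by blast

lemma alg_G:
  assumes alg: "is_alg S X h" and a: "\<And>t. t \<in> S \<Longrightarrow> a t \<in> S"
    and c: "\<And>t. t \<in> S \<Longrightarrow> c t \<in> TX S X"
  shows "h (\<lambda>t\<in>S. (a t, h (c t))) = h (\<lambda>t\<in>S. c t (a t))"
proof -
  let ?cc = "\<lambda>t\<in>S. (a t, c t)"
  have cc: "?cc \<in> TX S (TX S X)" using a c by (auto simp: TX_def)
  have "h (st_map S h ?cc) = h (st_mu S ?cc)"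
    using alg cc unfolding is_alg_def by blast
  moreover have "st_map S h ?cc = (\<lambda>t\<in>S. (a t, h (c t)))"
    unfolding st_map_def by (rule restrict_ext) simp
  moreover have "st_mu S ?cc = (\<lambda>t\<in>S. c t (a t))"
    unfolding st_mu_def by (rule restrict_ext) simp
  ultimately show ?thesis by simp
qed

lemma alg_eta: "is_alg S X h \<Longrightarrow> x \<in> X \<Longrightarrow> h (\<lambda>t\<in>S. (t, x)) = x"
  unfolding is_alg_def st_eta_def by blast

lemma const_TX: "s \<in> S \<Longrightarrow> x \<in> X \<Longrightarrow> (\<lambda>t\<in>S. (s, x)) \<in> TX S X"
  by (auto simp: TX_def)

lemma part5:
  assumes S: "S \<noteq> {}" and alg: "is_alg S X h"
  shows "\<exists>Y :: 'x set. alg_iso S (K_obj S Y) (X :: 'x set, h)"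
proof -
  obtain s0 where s0: "s0 \<in> S" using S by blast
  define p where "p = (\<lambda>s x. h (\<lambda>t\<in>S. (s, x)))"
  define Y where "Y = p s0 ` X"
  have pX: "s \<in> S \<Longrightarrow> x \<in> X \<Longrightarrow> p s x \<in> X" for s x
    unfolding p_def by (rule alg_closed[OF alg const_TX])
  have pp: "s \<in> S \<Longrightarrow> s' \<in> S \<Longrightarrow> x \<in> X \<Longrightarrow> p s (p s' x) = p s' x" for s s' x
    unfolding p_def using alg_G[OF alg, of "\<lambda>t. s" "\<lambda>t. \<lambda>t'\<in>S. (s', x)"]
    by (simp add: const_TX)
  have YX: "Y \<subseteq> X" unfolding Y_def using pX s0 by auto
  have pY: "s \<in> S \<Longrightarrow> y \<in> Y \<Longrightarrow> p s y = y" for s y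
    unfolding Y_def using pp s0 by auto
  have pinY: "s \<in> S \<Longrightarrow> x \<in> X \<Longrightarrow> p s x \<in> Y" for s x
    unfolding Y_def using pp[OF s0, of s x] pX by (metis image_eqI)
  have C: "h (\<lambda>t\<in>S. (a t, y t)) = h (\<lambda>t\<in>S. (s0, y t))"
    if a: "\<And>t. t \<in> S \<Longrightarrow> a t \<in> S" and y: "\<And>t. t \<in> S \<Longrightarrow> y t \<in> Y" for a y
  proof -
    have "h (\<lambda>t\<in>S. (a t, y t)) = h (\<lambda>t\<in>S. (a t, h ((\<lambda>t'\<in>S. (s0, y t)))))"
      by (intro arg_cong[where f=h] restrict_ext) (metis pY[OF s0] y p_def)
    also have "\<dots> = h (\<lambda>t\<in>S. (\<lambda>t'\<in>S. (s0, y t)) (a t))"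
      by (rule alg_G[OF alg a]) (use y YX s0 in \<open>auto intro: const_TX\<close>)
    also have "(\<lambda>t\<in>S. (\<lambda>t'\<in>S. (s0, y t)) (a t)) = (\<lambda>t\<in>S. (s0, y t))"
      by (rule restrict_ext) (simp add: a)
    finally show ?thesis .
  qed
  define u where "u = (\<lambda>f\<in>S \<rightarrow>\<^sub>E Y. h (\<lambda>t\<in>S. (t, f t)))"
  define v where "v = (\<lambda>x\<in>X. \<lambda>s\<in>S. p s x)"
  have fTX: "f \<in> S \<rightarrow>\<^sub>E Y \<Longrightarrow> (\<lambda>t\<in>S. (t, f t)) \<in> TX S X" for f
    using YX by (auto simp: TX_def)
  have uX: "f \<in> S \<rightarrow>\<^sub>E Y \<Longrightarrow> u f \<in> X" for f
    unfolding u_def using alg_closed[OF alg fTX] by simp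
  have vY: "x \<in> X \<Longrightarrow> v x \<in> S \<rightarrow>\<^sub>E Y" for x
    unfolding v_def using pinY by auto
  have vu: "f \<in> S \<rightarrow>\<^sub>E Y \<Longrightarrow> v (u f) = f" for f
  proof -
    assume f: "f \<in> S \<rightarrow>\<^sub>E Y"
    have "v (u f) s = f s" if s: "s \<in> S" for s
    proof -
      have "v (u f) s = h (\<lambda>t'\<in>S. (s, h (\<lambda>t\<in>S. (t, f t))))"
        using uX[OF f] s by (simp add: v_def p_def u_def f)
      also have "\<dots> = h (\<lambda>t'\<in>S. (\<lambda>t\<in>S. (t, f t)) s)"
        by (rule alg_G[OF alg]) (use s fTX[OF f] in auto)
      also have "\<dots> = p s (f s)" unfolding p_def using s by simp
      also have "\<dots> = f s" using pY s f by auto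
      finally show ?thesis .
    qed
    moreover have "v (u f) \<in> extensional S" "f \<in> extensional S"
      using vY[OF uX[OF f]] f by (auto simp: PiE_def)
    ultimately show ?thesis by (metis extensionalityI)
  qed
  have uv: "x \<in> X \<Longrightarrow> u (v x) = x" for x
  proof -
    assume x: "x \<in> X"
    have "u (v x) = h (\<lambda>t\<in>S. (t, h (\<lambda>t'\<in>S. (t, x))))"
      using vY[OF x] x unfolding u_def v_def p_def
      by (simp cong: restrict_cong)
    also have "\<dots> = h (\<lambda>t\<in>S. (\<lambda>t'\<in>S. (t, x)) t)"
      by (rule alg_G[OF alg]) (use x in \<open>auto intro: const_TX\<close>)
    also have "(\<lambda>t\<in>S. (\<lambda>t'\<in>S. (t, x)) t) = (\<lambda>t\<in>S. (t, x))"
      by (rule restrict_ext) simp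
    also have "h \<dots> = x" using alg_eta[OF alg x] .
    finally show ?thesis .
  qed
  have uhom: "u \<in> alg_hom S (K_obj S Y) (X, h)"
    unfolding alg_hom_def K_obj_def
  proof (simp, intro conjI ballI)
    show "u \<in> (S \<rightarrow>\<^sub>E Y) \<rightarrow>\<^sub>E X" using uX by (auto simp: u_def)
  next
    fix c assume c: "c \<in> TX S (S \<rightarrow>\<^sub>E Y)"
    have cS: "t \<in> S \<Longrightarrow> fst (c t) \<in> S" and cY: "t \<in> S \<Longrightarrow> snd (c t) \<in> S \<rightarrow>\<^sub>E Y" for t
      using PiE_mem[OF c[unfolded TX_def]] by (simp_all add: mem_Times_iff)
    have eY: "t \<in> S \<Longrightarrow> snd (c t) (fst (c t)) \<in> Y" for t using cS cY by auto
    have "h (st_map S u c) = h (\<lambda>t\<in>S. (fst (c t), h (\<lambda>t'\<in>S. (t', snd (c t) t'))))"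
      unfolding st_map_def by (rule arg_cong[where f=h], rule restrict_ext) (simp add: u_def cY)
    also have "\<dots> = h (\<lambda>t\<in>S. (\<lambda>t'\<in>S. (t', snd (c t) t')) (fst (c t)))"
      by (rule alg_G[OF alg cS fTX[OF cY]])
    also have "(\<lambda>t\<in>S. (\<lambda>t'\<in>S. (t', snd (c t) t')) (fst (c t))) = (\<lambda>t\<in>S. (fst (c t), snd (c t) (fst (c t))))"
      by (rule restrict_ext) (simp add: cS)
    also have "h \<dots> = h (\<lambda>t\<in>S. (s0, snd (c t) (fst (c t))))"
      by (rule C[OF cS eY])
    also have "\<dots> = h (\<lambda>t\<in>S. (t, snd (c t) (fst (c t))))"
      by (rule C[symmetric]) (use eY in auto)
    also have "\<dots> = u (st_eps_pow S c)"
    proof -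
      have e: "st_eps_pow S c \<in> S \<rightarrow>\<^sub>E Y" using eY by (auto simp: st_eps_pow_def st_eps_def)
      show ?thesis unfolding u_def using e
        by (simp, intro arg_cong[where f=h] restrict_ext) (simp add: st_eps_pow_def st_eps_def)
    qed
    finally show "h (st_map S u c) = u (st_eps_pow S c)" .
  qed
  have vhom: "v \<in> alg_hom S (X, h) (K_obj S Y)"
    unfolding alg_hom_def K_obj_def
  proof (simp, intro conjI ballI)
    show "v \<in> X \<rightarrow>\<^sub>E S \<rightarrow>\<^sub>E Y" using vY by (auto simp: v_def)
  next
    fix c assume c: "c \<in> TX S X"
    have cS: "t \<in> S \<Longrightarrow> fst (c t) \<in> S" and cX: "t \<in> S \<Longrightarrow> snd (c t) \<in> X" for t
      using PiE_mem[OF c[unfolded TX_def]] by (simp_all add: mem_Times_iff)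
    have hc: "h c \<in> X" by (rule alg_closed[OF alg c])
    show "st_eps_pow S (st_map S v c) = v (h c)"
    proof (rule extensionalityI[where A=S])
      show "st_eps_pow S (st_map S v c) \<in> extensional S" by (simp add: st_eps_pow_def)
      show "v (h c) \<in> extensional S" using vY[OF hc] by (auto simp: PiE_def)
      fix s assume s: "s \<in> S"
      have "st_eps_pow S (st_map S v c) s = p (fst (c s)) (snd (c s))"
        using s cS cX by (simp add: st_eps_pow_def st_eps_def st_map_def v_def)
      also have "\<dots> = h (\<lambda>t\<in>S. c s)"
        unfolding p_def by (intro arg_cong[where f=h] restrict_ext) simp
      also have "\<dots> = h (\<lambda>t\<in>S. (s, h c))"
        using alg_G[OF alg, of "\<lambda>t. s" "\<lambda>t. c"] s c by simp
      also have "\<dots> = v (h c) s" using hc s by (simp add: v_def p_def)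
      finally show "st_eps_pow S (st_map S v c) s = v (h c) s" .
    qed
  qed
  have "alg_iso S (K_obj S Y) (X, h)" unfolding alg_iso_def
    using uhom vhom vu uv by (auto simp: K_obj_def)
  then show ?thesis by blast
qed

theorem theorem1:
  fixes S :: "'s set"
  assumes "S \<noteq> {}"
  shows
    \<comment> \<open>K is a well-defined functor Sets \<rightarrow> Alg^T\<close>
    "(\<forall>Y :: 'a set. is_alg S (fst (K_obj S Y)) (snd (K_obj S Y)))
   \<and> (\<forall>(Y :: 'a set) (g :: 'a \<Rightarrow> 'b) (Y' :: 'b set) (g' :: 'b \<Rightarrow> 'c) (Y'' :: 'c set).
        g \<in> Y \<rightarrow>\<^sub>E Y' \<longrightarrow> g' \<in> Y' \<rightarrow>\<^sub>E Y'' \<longrightarrow>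
        K_mor S Y (compose Y g' g) = compose (fst (K_obj S Y)) (K_mor S Y' g') (K_mor S Y g))
   \<and> (\<forall>Y :: 'a set. K_mor S Y (restrict id Y) = restrict id (fst (K_obj S Y)))
    \<comment> \<open>K is fully faithful\<close>
   \<and> (\<forall>(Y :: 'a set) (Y' :: 'b set).
        bij_betw (K_mor S Y) (Y \<rightarrow>\<^sub>E Y') (alg_hom S (K_obj S Y) (K_obj S Y')))
    \<comment> \<open>K is essentially surjective\<close>
   \<and> (\<forall>(X :: 'x set) h. is_alg S X h \<longrightarrow> (\<exists>Y :: 'x set. alg_iso S (K_obj S Y) (X, h)))"
proof -
  obtain s0 where s0: "s0 \<in> S" using assms by blast
  have P1: "is_alg S (fst (K_obj S Y)) (snd (K_obj S Y))" for Y :: "'a set"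
    unfolding is_alg_def K_obj_def
  proof (simp, intro conjI ballI)
    fix c assume c: "c \<in> TX S (S \<rightarrow>\<^sub>E Y)"
    have cS: "t \<in> S \<Longrightarrow> fst (c t) \<in> S" and cY: "t \<in> S \<Longrightarrow> snd (c t) \<in> S \<rightarrow>\<^sub>E Y" for t
      using PiE_mem[OF c[unfolded TX_def]] by (simp_all add: mem_Times_iff)
    show "st_eps_pow S c \<in> S \<rightarrow>\<^sub>E Y"
      using cS cY by (auto simp: st_eps_pow_def st_eps_def)
  next
    fix cc assume cc: "cc \<in> TX S (TX S (S \<rightarrow>\<^sub>E Y))"
    have cS: "t \<in> S \<Longrightarrow> fst (cc t) \<in> S" for t
      using PiE_mem[OF cc[unfolded TX_def]] by (simp_all add: mem_Times_iff)
    show "st_eps_pow S (st_map S (st_eps_pow S) cc) = st_eps_pow S (st_mu S cc)"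
      unfolding st_eps_pow_def st_eps_def st_map_def st_mu_def
      by (rule restrict_ext) (simp add: cS)
  next
    fix f assume f: "f \<in> S \<rightarrow>\<^sub>E Y"
    show "st_eps_pow S (st_eta S f) = f"
      unfolding st_eps_pow_def st_eps_def st_eta_def
      using f by (auto simp: fun_eq_iff PiE_def extensional_def Pi_def)
  qed
  have P2: "K_mor S Y (compose Y g' g) = compose (fst (K_obj S Y)) (K_mor S Y' g') (K_mor S Y g)"
    if g: "g \<in> Y \<rightarrow>\<^sub>E Y'" for Y :: "'a set" and g :: "'a \<Rightarrow> 'b" and Y' and g' :: "'b \<Rightarrow> 'c"
  proof -
    have "K_mor S Y g f \<in> S \<rightarrow>\<^sub>E Y'" if "f \<in> S \<rightarrow>\<^sub>E Y" for f
      using that g by (auto simp: K_mor_def)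
    then show ?thesis
      unfolding K_obj_def fst_conv compose_def[of "S \<rightarrow>\<^sub>E Y"]
    proof (subst (1) K_mor_def, intro restrict_ext)
      fix f assume f: "f \<in> S \<rightarrow>\<^sub>E Y" and h: "\<And>f. f \<in> S \<rightarrow>\<^sub>E Y \<Longrightarrow> K_mor S Y g f \<in> S \<rightarrow>\<^sub>E Y'"
      show "(\<lambda>s\<in>S. compose Y g' g (f s)) = K_mor S Y' g' (K_mor S Y g f)"
        using h[OF f] f by (auto simp: K_mor_def compose_def intro!: restrict_ext)
    qed
  qed
  have P3: "K_mor S Y (restrict id Y) = restrict id (fst (K_obj S Y))" for Y :: "'a set"
    unfolding K_obj_def K_mor_def fst_conv
  proof (intro restrict_ext)
    fix f assume f: "f \<in> S \<rightarrow>\<^sub>E Y"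
    show "(\<lambda>s\<in>S. restrict id Y (f s)) = id f"
      using f by (auto simp: fun_eq_iff PiE_def extensional_def Pi_def)
  qed
  have P4: "bij_betw (K_mor S Y) (Y \<rightarrow>\<^sub>E Y') (alg_hom S (K_obj S Y) (K_obj S Y'))"
    for Y :: "'a set" and Y' :: "'b set"
  proof -
    have img: "K_mor S Y g \<in> alg_hom S (K_obj S Y) (K_obj S Y')" if g: "g \<in> Y \<rightarrow>\<^sub>E Y'" for g
      unfolding alg_hom_def K_obj_def
    proof (simp, intro conjI ballI)
      show "K_mor S Y g \<in> (S \<rightarrow>\<^sub>E Y) \<rightarrow>\<^sub>E S \<rightarrow>\<^sub>E Y'"
        using g by (auto simp: K_mor_def)
    next
      fix c assume c: "c \<in> TX S (S \<rightarrow>\<^sub>E Y)"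
      have cS: "t \<in> S \<Longrightarrow> fst (c t) \<in> S" and cY: "t \<in> S \<Longrightarrow> snd (c t) \<in> S \<rightarrow>\<^sub>E Y" for t
        using PiE_mem[OF c[unfolded TX_def]] by (simp_all add: mem_Times_iff)
      have e: "st_eps_pow S c \<in> S \<rightarrow>\<^sub>E Y" using cS cY by (auto simp: st_eps_pow_def st_eps_def)
      show "st_eps_pow S (st_map S (K_mor S Y g) c) = K_mor S Y g (st_eps_pow S c)"
        using e cY cS unfolding K_mor_def st_eps_pow_def st_eps_def st_map_def
        by (simp, intro restrict_ext) simp
    qed
    have inj: "inj_on (K_mor S Y) (Y \<rightarrow>\<^sub>E Y')"
    proof (rule inj_onI)
      fix g1 g2 assume g1: "g1 \<in> Y \<rightarrow>\<^sub>E Y'" and g2: "g2 \<in> Y \<rightarrow>\<^sub>E Y'"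
        and eq: "K_mor S Y g1 = K_mor S Y g2"
      show "g1 = g2"
      proof (rule extensionalityI[where A=Y])
        show "g1 \<in> extensional Y" "g2 \<in> extensional Y" using g1 g2 by (auto simp: PiE_def)
        fix y assume y: "y \<in> Y"
        have f: "(\<lambda>s\<in>S. y) \<in> S \<rightarrow>\<^sub>E Y" using y by auto
        have "K_mor S Y g1 (\<lambda>s\<in>S. y) s0 = K_mor S Y g2 (\<lambda>s\<in>S. y) s0" using eq by simp
        then show "g1 y = g2 y" using f s0 by (simp add: K_mor_def)
      qed
    qed
    have sur: "alg_hom S (K_obj S Y) (K_obj S Y') \<subseteq> K_mor S Y ` (Y \<rightarrow>\<^sub>E Y')"
    proof
      fix u assume "u \<in> alg_hom S (K_obj S Y) (K_obj S Y')"
      then have uE: "u \<in> (S \<rightarrow>\<^sub>E Y) \<rightarrow>\<^sub>E (S \<rightarrow>\<^sub>E Y')"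
        and hom: "\<And>c. c \<in> TX S (S \<rightarrow>\<^sub>E Y) \<Longrightarrow> st_eps_pow S (st_map S u c) = u (st_eps_pow S c)"
        by (auto simp: alg_hom_def K_obj_def)
      have key: "u f t = u (\<lambda>s'\<in>S. f t) s" if f: "f \<in> S \<rightarrow>\<^sub>E Y" and s: "s \<in> S" and t: "t \<in> S" for f s t
      proof -
        let ?c = "\<lambda>t\<in>S. (s, \<lambda>s'\<in>S. f t)"
        have c: "?c \<in> TX S (S \<rightarrow>\<^sub>E Y)" using f s by (auto simp: TX_def)
        have "st_eps_pow S ?c = f"
          using f s by (auto simp: st_eps_pow_def st_eps_def PiE_def extensional_def)
        then have "st_eps_pow S (st_map S u ?c) t = u f t" using hom[OF c] by simp
        then show ?thesis using s t by (simp add: st_eps_pow_def st_eps_def st_map_def)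
      qed
      define g where "g = (\<lambda>y\<in>Y. u (\<lambda>s\<in>S. y) s0)"
      have gE: "g \<in> Y \<rightarrow>\<^sub>E Y'"
      proof -
        have "u (\<lambda>s\<in>S. y) \<in> S \<rightarrow>\<^sub>E Y'" if "y \<in> Y" for y
          using uE that by auto
        then show ?thesis using s0 by (auto simp: g_def)
      qed
      have "K_mor S Y g = u"
      proof (rule extensionalityI[where A="S \<rightarrow>\<^sub>E Y"])
        show "K_mor S Y g \<in> extensional (S \<rightarrow>\<^sub>E Y)" by (simp add: K_mor_def)
        show "u \<in> extensional (S \<rightarrow>\<^sub>E Y)" using uE by (auto simp: PiE_def)
        fix f assume f: "f \<in> S \<rightarrow>\<^sub>E Y"
        show "K_mor S Y g f = u f"
        proof (rule extensionalityI[where A=S])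
          show "K_mor S Y g f \<in> extensional S" using f by (simp add: K_mor_def)
          show "u f \<in> extensional S" using uE f by (auto simp: PiE_def)
          fix t assume t: "t \<in> S"
          have fy: "f t \<in> Y" using f t by auto
          show "K_mor S Y g f t = u f t"
            using f t fy key[OF f s0 t] by (simp add: K_mor_def g_def)
        qed
      qed
      then show "u \<in> K_mor S Y ` (Y \<rightarrow>\<^sub>E Y')" using gE by blast
    qed
    show ?thesis unfolding bij_betw_def using inj img sur by blast
  qed
  show ?thesis using P1 P2 P3 P4 part5[OF assms] by blast
qed

end
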